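(* Let $q\geq 1$ and let $M$ be a graph of odd-girth $\ell+2$. Then $\mu^q(M)$ has odd-girth $\ell+2$.
   Context: The odd-girth of a graph is the length of a shortest odd cycle. For a graph $M$ and integer $q\geq1$, $\mu^q(M)$ is the graph obtained from $M$ (whose vertices $v$ are also written $v^0$, with the edges of $M$ kept) by adding, for each vertex $v$ of $M$, new vertices $v^1,\dots,v^q$, and for each $1\leq i\leq q$ joining $v^i$ to $w^{i-1}$ (and, for $i<q$, to $w^{i+1}$) whenever $vw$ is an edge of $M$. *)

theory Defs
  imports Main
begin

definition simple_graph :: "'a set \<Rightarrow> ('a \<Rightarrow> 'a \<Rightarrow> bool) \<Rightarrow> bool" where
  "simple_graph V E \<longleftrightarrow> finite V \<and> (\<forall>x y. E x y \<longrightarrow> x \<in> V \<and> y \<in> V)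
     \<and> (\<forall>x y. E x y \<longrightarrow> E y x) \<and> (\<forall>x. \<not> E x x)"

definition is_cycle :: "'a set \<Rightarrow> ('a \<Rightarrow> 'a \<Rightarrow> bool) \<Rightarrow> 'a list \<Rightarrow> bool" where
  "is_cycle V E xs \<longleftrightarrow> 3 \<le> length xs \<and> distinct xs \<and> set xs \<subseteq> V
     \<and> (\<forall>i < length xs. E (xs ! i) (xs ! ((i + 1) mod length xs)))"

definition has_odd_girth :: "'a set \<Rightarrow> ('a \<Rightarrow> 'a \<Rightarrow> bool) \<Rightarrow> nat \<Rightarrow> bool" where
  "has_odd_girth V E k \<longleftrightarrow>
     (\<exists>xs. is_cycle V E xs \<and> odd (length xs) \<and> length xs = k)
     \<and> (\<forall>xs. is_cycle V E xs \<and> odd (length xs) \<longrightarrow> k \<le> length xs)"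

text \<open>The graph mu^q(M): vertex v^i is represented as (v, i), with v^0 = v.\<close>
definition mu_V :: "nat \<Rightarrow> 'a set \<Rightarrow> ('a \<times> nat) set" where
  "mu_V q V = V \<times> {0..q}"

definition mu_E :: "nat \<Rightarrow> ('a \<Rightarrow> 'a \<Rightarrow> bool) \<Rightarrow> ('a \<times> nat) \<Rightarrow> ('a \<times> nat) \<Rightarrow> bool" where
  "mu_E q E x y \<longleftrightarrow> (case (x, y) of ((v, i), (w, j)) \<Rightarrow>
      i \<le> q \<and> j \<le> q \<and> E v w \<and> ((i = 0 \<and> j = 0) \<or> j = i + 1 \<or> i = j + 1))"

end

theory Submission
  imports Defs
begin

definition cwalk :: "('a \<Rightarrow> 'a \<Rightarrow> bool) \<Rightarrow> 'a list \<Rightarrow> bool" where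
  "cwalk E xs \<longleftrightarrow> xs \<noteq> [] \<and> (\<forall>i < length xs. E (xs ! i) (xs ! ((i + 1) mod length xs)))"

lemma cwalk_rotate:
  assumes "cwalk E xs" shows "cwalk E (rotate k xs)"
proof -
  let ?n = "length xs"
  have n: "?n > 0" using assms by (auto simp: cwalk_def)
  { fix m assume m: "m < ?n"
    have "(m + 1) mod ?n < ?n" using n by simp
    hence e: "rotate k xs ! ((m + 1) mod ?n) = xs ! (((m+1) mod ?n + k) mod ?n)"
      by (simp add: nth_rotate add.commute)
    have e2: "((m+1) mod ?n + k) mod ?n = ((m + k) mod ?n + 1) mod ?n"
      by (simp add: mod_simps add.commute add.left_commute)
    have "E (xs ! ((m + k) mod ?n)) (xs ! (((m + k) mod ?n + 1) mod ?n))"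
      using assms n unfolding cwalk_def by simp
    hence "E (rotate k xs ! m) (rotate k xs ! ((m + 1) mod ?n))"
      using e e2 m by (simp add: nth_rotate add.commute)
  }
  thus ?thesis using assms by (auto simp: cwalk_def)
qed

lemma cwalk_take:
  assumes "cwalk E xs" "0 < d" "d < length xs" "xs ! 0 = xs ! d"
  shows "cwalk E (take d xs)"
proof -
  { fix m assume m: "m < d"
    have "E (take d xs ! m) (take d xs ! ((m + 1) mod d))"
    proof (cases "m + 1 < d")
      case True
      have "m < length xs" using m assms by simp
      hence "E (xs ! m) (xs ! ((m+1) mod length xs))" using assms(1) unfolding cwalk_def by blast
      moreover have "(m+1) mod length xs = m+1" using True assms by simp
      ultimately show ?thesis using True m by simp
    next
      case False
      hence "m + 1 = d" using m by simp
      have "m < length xs" using m assms by simp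
      hence "E (xs ! m) (xs ! ((m+1) mod length xs))" using assms(1) unfolding cwalk_def by blast
      moreover have "(m+1) mod length xs = d" using \<open>m+1 = d\<close> assms by simp
      ultimately show ?thesis using assms m \<open>m+1 = d\<close> by simp
    qed }
  thus ?thesis using assms by (auto simp: cwalk_def)
qed

lemma cwalk_drop:
  assumes "cwalk E xs" "0 < d" "d < length xs" "xs ! 0 = xs ! d"
  shows "cwalk E (drop d xs)"
proof -
  let ?n = "length xs"
  { fix m assume m: "m < ?n - d"
    have "E (drop d xs ! m) (drop d xs ! ((m + 1) mod (?n - d)))"
    proof (cases "m + 1 < ?n - d")
      case True
      have "E (xs ! (d+m)) (xs ! ((d+m+1) mod ?n))" using assms m unfolding cwalk_def by simp
      moreover have "(d+m+1) mod ?n = d + (m+1)" using True by simp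
      ultimately show ?thesis using assms m True by simp
    next
      case False
      hence mm: "m + 1 = ?n - d" using m by simp
      have "E (xs ! (d+m)) (xs ! ((d+m+1) mod ?n))" using assms m unfolding cwalk_def by simp
      moreover have "d+m+1 = ?n" using mm assms by simp
      hence "(d+m+1) mod ?n = 0" by simp
      ultimately show ?thesis using assms m mm by simp
    qed }
  thus ?thesis using assms by (auto simp: cwalk_def)
qed

lemma odd_walk_cycle:
  assumes "\<forall>x. \<not> E x x"
  shows "odd (length xs) \<Longrightarrow> cwalk E xs \<Longrightarrow> set xs \<subseteq> V \<Longrightarrow>
    \<exists>ys. is_cycle V E ys \<and> odd (length ys) \<and> length ys \<le> length xs"
proof (induction "length xs" arbitrary: xs rule: less_induct)
  case less
  show ?case
  proof (cases "distinct xs")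
    case True
    have "length xs \<noteq> 1"
    proof
      assume "length xs = 1"
      then obtain x where "xs = [x]" by (metis One_nat_def length_0_conv length_Suc_conv)
      thus False using less.prems assms by (auto simp: cwalk_def)
    qed
    hence "3 \<le> length xs" using less.prems(1)
      by (metis One_nat_def Suc_1 Suc_leI eval_nat_numeral(3) le_neq_implies_less
           less_one linorder_not_le odd_pos dvd_refl not_less_eq_eq)
    hence "is_cycle V E xs" using True less.prems unfolding is_cycle_def cwalk_def by auto
    thus ?thesis using less.prems by blast
  next
    case False
    then obtain i j where ij: "i < j" "j < length xs" "xs ! i = xs ! j"
      by (metis distinct_conv_nth linorder_neqE_nat)
    define ys where "ys = rotate i xs"
    define d where "d = j - i"
    have ly: "length ys = length xs" by (simp add: ys_def)
    have d: "0 < d" "d < length ys" using ij ly by (auto simp: d_def)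
    have "ys ! 0 = xs ! i" using ij proof -
      have "0 < length xs" using ij by arith
      hence "rotate i xs ! 0 = xs ! ((i+0) mod length xs)" by (rule nth_rotate)
      thus ?thesis using ij by (simp add: ys_def)
    qed
    moreover have "ys ! d = xs ! j" using ij d ly by (simp add: ys_def nth_rotate d_def)
    ultimately have e: "ys ! 0 = ys ! d" using ij by simp
    have wy: "cwalk E ys" using less.prems cwalk_rotate ys_def by blast
    have sy: "set ys \<subseteq> V" using less.prems by (simp add: ys_def)
    have w1: "cwalk E (take d ys)" using cwalk_take[OF wy d e] .
    have w2: "cwalk E (drop d ys)" using cwalk_drop[OF wy d e] .
    have l1: "length (take d ys) = d" using d by simp
    have l2: "length (drop d ys) = length xs - d" using ly by simp
    have s1: "set (take d ys) \<subseteq> V" using sy by (meson order_trans set_take_subset)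
    have s2: "set (drop d ys) \<subseteq> V" using sy by (meson order_trans set_drop_subset)
    show ?thesis
    proof (cases "odd d")
      case True
      from less.hyps[of "take d ys"] l1 d ly True w1 s1 show ?thesis by fastforce
    next
      case False
      hence "odd (length xs - d)" using less.prems(1) d ly by auto
      from less.hyps[of "drop d ys"] l2 d ly this w2 s2 show ?thesis by fastforce
    qed
  qed
qed

theorem lemma5:
  fixes V :: "'a set" and E :: "'a \<Rightarrow> 'a \<Rightarrow> bool" and q l :: nat
  assumes "simple_graph V E"
    and "q \<ge> 1"
    and "has_odd_girth V E (l + 2)"
  shows "has_odd_girth (mu_V q V) (mu_E q E) (l + 2)"
proof -
  have irr: "\<forall>x. \<not> E x x" using assms(1) by (simp add: simple_graph_def)
  obtain xs where xs: "is_cycle V E xs" "odd (length xs)" "length xs = l + 2"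
    using assms(3) by (auto simp: has_odd_girth_def)
  let ?ys = "map (\<lambda>v. (v, 0::nat)) xs"
  have "is_cycle (mu_V q V) (mu_E q E) ?ys"
    using xs(1) unfolding is_cycle_def mu_V_def
  proof (intro conjI allI impI)
    fix i assume i: "i < length ?ys"
    have "(i+1) mod length xs < length xs" using i by (metis length_map mod_less_divisor gr_implies_not0 neq0_conv)
    thus "mu_E q E (?ys ! i) (?ys ! ((i + 1) mod length ?ys))"
      using xs(1) i unfolding is_cycle_def mu_E_def by auto
  qed (auto simp: distinct_map inj_on_def)
  hence ex: "\<exists>xs. is_cycle (mu_V q V) (mu_E q E) xs \<and> odd (length xs) \<and> length xs = l + 2"
    using xs by (intro exI[of _ ?ys]) simp
  have "l + 2 \<le> length zs" if z: "is_cycle (mu_V q V) (mu_E q E) zs" "odd (length zs)" for zs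
  proof -
    have "cwalk E (map fst zs)" unfolding cwalk_def
    proof (intro conjI allI impI)
      show "map fst zs \<noteq> []" using z(1) unfolding is_cycle_def by auto
      fix i assume i: "i < length (map fst zs)"
      have "0 < length zs" using i by (simp only: length_map)
      hence "(i+1) mod length zs < length zs" by simp
      moreover have "mu_E q E (zs ! i) (zs ! ((i+1) mod length zs))" using z(1) i unfolding is_cycle_def by simp
      ultimately show "E (map fst zs ! i) (map fst zs ! ((i + 1) mod length (map fst zs)))"
        using i unfolding mu_E_def by (auto split: prod.splits)
    qed
    moreover have "set (map fst zs) \<subseteq> V" using z(1) unfolding is_cycle_def mu_V_def by auto
    ultimately obtain ys where "is_cycle V E ys" "odd (length ys)" "length ys \<le> length zs"
      using odd_walk_cycle[of E "map fst zs" V, OF irr] z(2) by auto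
    thus ?thesis using assms(3) unfolding has_odd_girth_def by fastforce
  qed
  thus ?thesis using ex unfolding has_odd_girth_def by blast
qed

end
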